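(* Let $D$ be a positive squarefree integer with $N(\varepsilon)=-1$. The meromorphic continuation of $Z_D^{\mathrm{odd}}(s)$ is holomorphic at every negative odd integer and vanishes there: $Z_D^{\mathrm{odd}}(-(2j+1))=0$ for all integers $j\ge0$.
   Context: $D$ positive squarefree, $\mathcal{O}_D$ the ring of integers of $\mathbb{Q}(\sqrt D)\subset\mathbb{R}$, $\varepsilon>1$ its fundamental unit, $\overline{\varepsilon}$ its conjugate, $N$ the norm. $q=D$ if $D\equiv1\bmod4$, else $q=4D$. $F_D(n)=(\varepsilon^n-\overline{\varepsilon}^{\,n})/\sqrt q$, and $Z_D^{\mathrm{odd}}(s)=\sum_{n\ge1}F_D(2n-1)^{-s}$ for $\operatorname{Re}s>0$, continued meromorphically to $\mathbb{C}$. *)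

theory Defs
  imports "HOL-Complex_Analysis.Complex_Analysis" "HOL-Computational_Algebra.Squarefree"
begin

text \<open>Integral basis generator of the ring of integers of Q(sqrt D), viewed inside the reals.\<close>
definition qomega :: "nat \<Rightarrow> real" where
  "qomega D = (if D mod 4 = 1 then (1 + sqrt (real D)) / 2 else sqrt (real D))"

definition ring_of_integers :: "nat \<Rightarrow> real set" where
  "ring_of_integers D = {of_int a + of_int b * qomega D | a b :: int. True}"

definition fund_unit :: "nat \<Rightarrow> real" where
  "fund_unit D = Inf {x. x \<in> ring_of_integers D \<and> x > 1 \<and> inverse x \<in> ring_of_integers D}"

definition qconj :: "nat \<Rightarrow> real \<Rightarrow> real" where
  "qconj D x = (THE y. \<exists>a b :: rat. x = of_rat a + of_rat b * sqrt (real D)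
                                 \<and> y = of_rat a - of_rat b * sqrt (real D))"

definition qnorm :: "nat \<Rightarrow> real \<Rightarrow> real" where
  "qnorm D x = x * qconj D x"

definition qdisc :: "nat \<Rightarrow> nat" where
  "qdisc D = (if D mod 4 = 1 then D else 4 * D)"

definition F_D :: "nat \<Rightarrow> nat \<Rightarrow> real" where
  "F_D D n = (fund_unit D ^ n - qconj D (fund_unit D) ^ n) / sqrt (real (qdisc D))"

text \<open>The series Z_D^odd(s) = sum over n >= 1 of F_D(2n-1)^(-s) (reindexed from n = 0).\<close>
definition Z_odd :: "nat \<Rightarrow> complex \<Rightarrow> complex" where
  "Z_odd D s = (\<Sum>n. complex_of_real (F_D D (2 * n + 1)) powr (- s))"

end

theory Submission
  imports Defs "HOL-Computational_Algebra.Polynomial"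
begin


lemma norm_pochhammer_le:
  fixes z :: complex
  assumes "norm z \<le> R"
  shows "norm (pochhammer z k) \<le> pochhammer R k"
proof (induction k)
  case 0 then show ?case by simp
next
  case (Suc k)
  have R0: "R \<ge> 0" using assms norm_ge_zero order_trans by blast
  have "norm (pochhammer z (Suc k)) = norm (pochhammer z k) * norm (z + of_nat k)"
    by (simp add: pochhammer_Suc norm_mult)
  also have "\<dots> \<le> pochhammer R k * (R + of_nat k)"
  proof (rule mult_mono)
    show "norm (z + of_nat k) \<le> R + of_nat k"
      using norm_triangle_ineq[of z "of_nat k"] assms by (simp add: norm_of_nat)
  qed (use Suc R0 order_trans[OF norm_ge_zero Suc.IH] in auto)
  finally show ?case by (simp add: pochhammer_Suc)
qed

lemma norm_gbinomial_le:
  fixes a :: complex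
  assumes "norm a \<le> R"
  shows "norm (a gchoose k) \<le> pochhammer R k / fact k"
proof -
  have "norm (a gchoose k) = norm (pochhammer (-a) k) / fact k"
    by (simp add: gbinomial_pochhammer norm_mult norm_divide norm_power)
  also have "\<dots> \<le> pochhammer R k / fact k"
    by (intro divide_right_mono norm_pochhammer_le) (use assms in auto)
  finally show ?thesis .
qed

lemma pochhammer_series:
  fixes R y :: real
  assumes "0 \<le> y" "y < 1"
  shows "(\<lambda>k. pochhammer R k / fact k * y ^ k) sums ((1 - y) powr (-R))"
proof -
  have "(\<lambda>k. ((-R) gchoose k) * (-y) ^ k) sums ((1 + (-y)) powr (-R))"
    by (rule gen_binomial_real) (use assms in auto)
  moreover have "((-R) gchoose k) * (-y) ^ k = pochhammer R k / fact k * y ^ k" for k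
  proof -
    have "((-R) gchoose k) * (-y) ^ k = (-1)^k * pochhammer R k / fact k * ((-1)^k * y ^ k)"
      by (subst power_minus[of y]) (simp add: gbinomial_pochhammer)
    also have "\<dots> = ((-1)^k * (-1)^k) * (pochhammer R k / fact k * y ^ k)"
      by (simp only: mult_ac times_divide_eq_left times_divide_eq_right)
    also have "(-1::real)^k * (-1)^k = 1"
      by (simp add: power_mult_distrib[symmetric])
    finally show ?thesis by simp
  qed
  ultimately show ?thesis by simp
qed



definition fL :: "real \<Rightarrow> complex \<Rightarrow> complex" where
  "fL L w = exp (-(of_real L * w)) / (1 - exp (-(2 * of_real L * w)))"

definition tk :: "real \<Rightarrow> nat \<Rightarrow> complex \<Rightarrow> complex" where
  "tk L k s = ((-s) gchoose k) * fL L (s + 2 * of_nat k)"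

definition aa :: "real \<Rightarrow> complex \<Rightarrow> nat \<Rightarrow> nat \<Rightarrow> complex" where
  "aa L s n k = ((-s) gchoose k) * exp (-(of_nat (2*n+1) * of_real L * (s + 2 * of_nat k)))"

lemma geo_fL:
  assumes L: "L > 0" and w: "Re w > 0"
  shows "(\<lambda>n. exp (-(of_nat (2*n+1) * of_real L * w))) sums fL L w"
proof -
  define q where "q = exp (-(2 * of_real L * w))"
  have nq: "norm q < 1" using L w by (simp add: q_def)
  have "(\<lambda>n. q ^ n) sums (1 / (1 - q))" by (rule geometric_sums[OF nq])
  hence "(\<lambda>n. exp (-(of_real L * w)) * q ^ n) sums (exp (-(of_real L * w)) * (1 / (1 - q)))"
    by (rule sums_mult)
  moreover have "exp (-(of_real L * w)) * q ^ n = exp (-(of_nat (2*n+1) * of_real L * w))" for n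
  proof -
    have "q ^ n = exp (of_nat n * (-(2 * of_real L * w)))"
      by (simp only: q_def exp_of_nat_mult)
    hence "exp (-(of_real L * w)) * q ^ n = exp (-(of_real L * w) + of_nat n * (-(2 * of_real L * w)))"
      by (simp only: exp_add)
    also have "-(of_real L * w) + of_nat n * (-(2 * of_real L * w)) = -(of_nat (2*n+1) * of_real L * w)"
      by (simp add: algebra_simps)
    finally show ?thesis .
  qed
  ultimately show ?thesis by (simp add: fL_def q_def)
qed

lemma exp2_le: "exp (-2::real) \<le> 1/2"
proof -
  have "3 \<le> exp (2::real)" using exp_ge_add_one_self[of 2] by simp
  thus ?thesis by (simp add: exp_minus field_simps)
qed

lemma norm_fL_le:
  assumes L: "L > 0" and w: "Re w * L \<ge> 1"
  shows "norm (fL L w) \<le> 2 * exp (- (L * Re w))"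
proof -
  have "exp (-(2 * L * Re w)) \<le> exp (-2)"
    using w by (simp add: mult_ac)
  hence e: "exp (-(2 * L * Re w)) \<le> 1/2" using exp2_le by linarith
  have "norm (1 - exp (-(2 * of_real L * w))) \<ge> 1 - norm (exp (-(2 * of_real L * w)))"
    by (metis norm_one norm_triangle_ineq2)
  also have "norm (exp (-(2 * of_real L * w))) = exp (-(2 * L * Re w))" by simp
  finally have d: "norm (1 - exp (-(2 * of_real L * w))) \<ge> 1/2" using e by linarith
  have "norm (fL L w) = exp (- (L * Re w)) / norm (1 - exp (-(2 * of_real L * w)))"
    by (simp add: fL_def norm_divide)
  also have "\<dots> \<le> exp (- (L * Re w)) / (1/2)"
    by (rule divide_left_mono) (use d in auto)
  finally show ?thesis by simp
qed

lemma norm_tk_le: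
  assumes L: "L > 0" and s: "norm s \<le> R" and k: "(2 * real k - R) * L \<ge> 1"
  shows "norm (tk L k s) \<le> 2 * exp (R * L) * (pochhammer R k / fact k * exp (-2*L) ^ k)"
proof -
  have Re: "Re s \<ge> - R" using s abs_Re_le_cmod[of s] by linarith
  have rw: "Re (s + 2 * of_nat k) = Re s + 2 * real k" by simp
  have "Re (s + 2 * of_nat k) * L \<ge> (2 * real k - R) * L"
    using Re L by (intro mult_right_mono) auto
  hence w: "Re (s + 2 * of_nat k) * L \<ge> 1" using k by linarith
  have f: "norm (fL L (s + 2 * of_nat k)) \<le> 2 * exp (- (L * (Re s + 2 * real k)))"
    using norm_fL_le[OF L w] by simp
  have "exp (- (L * (Re s + 2 * real k))) \<le> exp (- (L * (- R + 2 * real k)))"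
    using Re L by (intro exp_mono) (auto intro!: mult_left_mono)
  also have "\<dots> = exp (R * L) * exp (-2*L) ^ k"
    by (simp add: exp_of_nat_mult[symmetric] exp_add[symmetric] algebra_simps)
  finally have f2: "norm (fL L (s + 2 * of_nat k)) \<le> 2 * (exp (R * L) * exp (-2*L) ^ k)"
    using f by linarith
  have b: "norm ((-s) gchoose k) \<le> pochhammer R k / fact k"
    by (rule norm_gbinomial_le) (use s in simp)
  have "norm (tk L k s) = norm ((-s) gchoose k) * norm (fL L (s + 2 * of_nat k))"
    by (simp add: tk_def norm_mult)
  also have "\<dots> \<le> (pochhammer R k / fact k) * (2 * (exp (R * L) * exp (-2*L) ^ k))"
    by (rule mult_mono[OF b f2]) (use order_trans[OF norm_ge_zero b] in auto)
  finally show ?thesis by (simp add: mult_ac)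
qed



lemma gbin_analytic: "(\<lambda>s::complex. (-s) gchoose k) analytic_on A"
  unfolding gbinomial_prod_rev by (intro analytic_intros) auto

lemma tk_eq: "tk L k = (\<lambda>s. ((-s) gchoose k) * (exp (-(of_real L * (s + 2 * of_nat k))) /
          (1 - exp (-(2 * of_real L * (s + 2 * of_nat k))))))"
  by (simp add: fun_eq_iff tk_def fL_def)

lemma tk_analytic:
  assumes "\<And>s. s \<in> A \<Longrightarrow> 1 - exp (-(2 * of_real L * (s + 2 * of_nat k))) \<noteq> 0"
  shows "tk L k analytic_on A"
proof -
  have "(\<lambda>s. ((-s) gchoose k) * (exp (-(of_real L * (s + 2 * of_nat k))) /
          (1 - exp (-(2 * of_real L * (s + 2 * of_nat k)))))) analytic_on A"
    by (intro analytic_intros gbin_analytic) (use assms in auto)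
  thus ?thesis by (subst tk_eq)
qed

lemma tk_mero: "tk L k meromorphic_on A"
proof -
  have "(\<lambda>s. ((-s) gchoose k) * (exp (-(of_real L * (s + 2 * of_nat k))) /
          (1 - exp (-(2 * of_real L * (s + 2 * of_nat k)))))) meromorphic_on A"
    by (intro meromorphic_intros analytic_on_imp_meromorphic_on gbin_analytic analytic_intros)
  thus ?thesis by (subst tk_eq)
qed

lemma tk_local:
  assumes L: "L > 0"
  obtains K0 T where "T holomorphic_on ball z 1"
    "\<And>s. s \<in> ball z 1 \<Longrightarrow> (\<lambda>k. tk L k s) sums (T s + (\<Sum>k<K0. tk L k s))"
proof -
  define R where "R = norm z + 1"
  define K0 where "K0 = nat \<lceil>(1/L + R)/2\<rceil>"
  have K0: "(2 * real k - R) * L \<ge> 1" if "k \<ge> K0" for k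
  proof -
    have "real K0 \<ge> (1/L + R)/2" unfolding K0_def by linarith
    moreover have "real k \<ge> real K0" using that by simp
    ultimately have "(1/L + R)/2 \<le> real k" by linarith
    hence "1/L + R \<le> 2 * real k" by (simp add: field_simps)
    hence "2 * real k - R \<ge> 1/L" by linarith
    hence "(2 * real k - R) * L \<ge> (1/L) * L" using L by (intro mult_right_mono) auto
    thus ?thesis using L by simp
  qed
  have sR: "norm s \<le> R" if "s \<in> ball z 1" for s
    using that norm_triangle_ineq2[of s z] by (auto simp: R_def dist_norm norm_minus_commute)
  have den: "1 - exp (-(2 * of_real L * (s + 2 * of_nat k))) \<noteq> 0"
    if "s \<in> ball z 1" "k \<ge> K0" for s k
  proof -
    have Re: "Re s \<ge> - R" using sR[OF that(1)] abs_Re_le_cmod[of s] by linarith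
    have "(Re s + 2 * real k) * L \<ge> (2 * real k - R) * L"
      using Re L by (intro mult_right_mono) auto
    hence "(Re s + 2 * real k) * L > 0" using K0[OF that(2)] by linarith
    hence "L * (Re s + 2 * real k) > 0" by (simp add: mult_ac)
    moreover have "norm (exp (-(2 * of_real L * (s + 2 * of_nat k)))) = exp (-(2 * (L * (Re s + 2 * real k))))"
      by (simp add: norm_exp_eq_Re)
    ultimately have "norm (exp (-(2 * of_real L * (s + 2 * of_nat k)))) < 1"
      by simp
    thus ?thesis by (metis norm_one order_less_irrefl right_minus_eq)
  qed
  define q where "q = exp (-2 * L)"
  have q: "0 \<le> q" "q < 1" using L by (auto simp: q_def)
  define h where "h n = 2 * exp (R * L) * (pochhammer R (n + K0) / fact (n + K0) * q ^ (n + K0))" for n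
  have sh: "summable h"
  proof -
    have "summable (\<lambda>k. pochhammer R k / fact k * q ^ k)"
      using pochhammer_series[OF q] by (rule sums_summable)
    hence "summable (\<lambda>n. pochhammer R (n + K0) / fact (n + K0) * q ^ (n + K0))"
      by (rule summable_ignore_initial_segment)
    thus ?thesis unfolding h_def by (rule summable_mult)
  qed
  have hol: "tk L (n + K0) holomorphic_on ball z 1" for n
    by (rule analytic_imp_holomorphic, rule tk_analytic) (use den[of _ "n + K0"] in auto)
  obtain G G' where GG: "\<forall>x \<in> ball z 1. ((\<lambda>n. tk L (n + K0) x) sums G x) \<and>
      ((\<lambda>n. deriv (tk L (n + K0)) x) sums G' x) \<and> (G has_field_derivative G' x) (at x)"
  proof (rule series_and_derivative_comparison[OF _ sh])
    show "open (ball z 1)" by simp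
    show "(tk L (n + K0) has_field_derivative deriv (tk L (n + K0)) x) (at x)"
      if "x \<in> ball z 1" for n x
      by (rule holomorphic_derivI[OF hol _ that]) simp
    show "\<forall>\<^sub>F n in sequentially. \<forall>x\<in>ball z 1. norm (tk L (n + K0) x) \<le> h n"
    proof (intro always_eventually allI ballI)
      fix n x assume x: "x \<in> ball z 1"
      show "norm (tk L (n + K0) x) \<le> h n"
        unfolding h_def q_def by (rule norm_tk_le[OF L sR[OF x] K0]) simp
    qed
  qed auto
  have "G holomorphic_on ball z 1"
    using GG by (subst holomorphic_on_open) auto
  moreover have "(\<lambda>k. tk L k s) sums (G s + (\<Sum>k<K0. tk L k s))" if "s \<in> ball z 1" for s
    using GG that by (subst sums_iff_shift[symmetric]) auto
  ultimately show ?thesis by (rule that)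
qed



lemma g_mero:
  assumes L: "L > 0" and A: "A analytic_on UNIV"
  shows "(\<lambda>s. A s * (\<Sum>k. tk L k s)) meromorphic_on UNIV"
proof (subst meromorphic_on_meromorphic_at, intro ballI)
  fix z :: complex
  obtain K0 T where T: "T holomorphic_on ball z 1"
    "\<And>s. s \<in> ball z 1 \<Longrightarrow> (\<lambda>k. tk L k s) sums (T s + (\<Sum>k<K0. tk L k s))"
    using tk_local[OF L] by metis
  define H where "H s = A s * (T s + (\<Sum>k<K0. tk L k s))" for s
  have ev: "eventually (\<lambda>s. s \<in> ball z 1) (nhds z)"
    by (intro eventually_nhds_in_open) auto
  have eq: "eventually (\<lambda>s. A s * (\<Sum>k. tk L k s) = H s) (nhds z)"
    using ev by eventually_elim (use T(2) in \<open>auto simp: H_def sums_iff\<close>)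
  have Tz: "T analytic_on {z}"
    using T(1) analytic_on_open[of "ball z 1" T] analytic_on_subset[of T "ball z 1" "{z}"] by auto
  have "H meromorphic_on {z}"
    unfolding H_def
    by (intro meromorphic_intros analytic_on_imp_meromorphic_on Tz tk_mero
          analytic_on_subset[OF A]) auto
  moreover have "eventually (\<lambda>s. A s * (\<Sum>k. tk L k s) = H s) (at z)"
    using eq by (simp add: eventually_at_filter eventually_mono)
  ultimately show "(\<lambda>s. A s * (\<Sum>k. tk L k s)) meromorphic_on {z}"
    by (subst meromorphic_on_cong[where g = H]) auto
qed



lemma fL_odd:
  assumes "exp (2 * of_real L * w) \<noteq> 1"
  shows "fL L (-w) = - fL L w"
proof -
  define a where "a = exp (of_real L * w)"
  have a0: "a \<noteq> 0" by (simp add: a_def)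
  have e1: "exp (-(of_real L * w)) = inverse a" by (simp add: a_def exp_minus)
  have e3: "exp (2 * of_real L * w) = a ^ 2"
  proof -
    have "exp (of_nat 2 * (of_real L * w)) = a ^ 2" by (simp only: a_def exp_of_nat_mult)
    moreover have "2 * of_real L * w = of_nat 2 * (of_real L * w)" by simp
    ultimately show ?thesis by metis
  qed
  have e2: "exp (-(2 * of_real L * w)) = inverse a ^ 2"
    by (simp only: exp_minus e3 power_inverse)
  have a2: "a ^ 2 \<noteq> 1" using assms e3 by simp
  have m1: "-(of_real L * (-w)) = of_real L * w" by simp
  have m2: "-(2 * of_real L * (-w)) = 2 * of_real L * w" by simp
  have "fL L (-w) = a / (1 - a^2)"
    unfolding fL_def m1 m2 e3 a_def ..
  moreover have "fL L w = inverse a / (1 - inverse a ^ 2)"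
    unfolding fL_def e1 e2 ..
  moreover have "inverse a / (1 - inverse a ^ 2) = - (a / (1 - a^2))"
  proof -
    have d: "1 - a^2 \<noteq> 0" using a2 by simp
    have "a ^ 2 - 1 \<noteq> 0" using a2 by simp
    have "inverse a / (1 - inverse a ^ 2) = (inverse a * a^2) / ((1 - inverse a ^ 2) * a^2)"
      using a0 by simp
    also have "inverse a * a^2 = a" using a0 by (simp add: power2_eq_square)
    also have "(1 - inverse a ^ 2) * a^2 = a^2 - 1" using a0 by (simp add: algebra_simps power2_eq_square)
    also have "a / (a^2 - 1) = - (a / (1 - a^2))"
      by (metis divide_minus_right minus_diff_eq)
    finally show ?thesis .
  qed
  ultimately show ?thesis by simp
qed

lemma exp_real_ne1:
  assumes "L > 0" "r \<noteq> 0" and that: "c = 2 \<or> c = -2"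
  shows "exp (c * of_real L * of_real r) \<noteq> (1::complex)"
proof -
  have "exp (c * of_real L * of_real r) = of_real (exp (Re c * L * r))"
  proof -
    have "c * of_real L * of_real r = (of_real (Re c * L * r) :: complex)"
      using that by auto
    thus ?thesis by (simp only: exp_of_real)
  qed
  moreover have "exp (Re c * L * r) \<noteq> 1" using assms that by auto
  ultimately show ?thesis by (metis of_real_eq_1_iff)
qed

lemma binom_sum_zero:
  assumes L: "L > 0" and n: "odd n"
  shows "(\<Sum>k=0..n. of_nat (n choose k) * fL L (of_int (2 * int k - int n))) = 0"
proof -
  define \<phi> where "\<phi> k = of_nat (n choose k) * fL L (of_int (2 * int k - int n))" for k
  have neg: "\<phi> (n + 0 - k) = - \<phi> k" if "k \<in> {0..n}" for k
  proof -
    have kn: "k \<le> n" using that by simp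
    have "2 * int k - int n \<noteq> 0" using n by presburger
    hence r0: "real_of_int (2 * int k - int n) \<noteq> 0" by simp
    have c1: "of_int (2 * int (n - k) - int n) = - (of_int (2 * int k - int n) :: complex)"
      using kn by (simp add: of_nat_diff)
    have c2: "exp (2 * of_real L * (of_int (2 * int k - int n))) \<noteq> (1::complex)"
      using exp_real_ne1[OF L r0, of 2] by simp
    have c3: "n choose (n - k) = n choose k" using binomial_symmetric[OF kn] by simp
    have "\<phi> (n + 0 - k) = of_nat (n choose k) * fL L (- of_int (2 * int k - int n))"
      unfolding \<phi>_def by (simp only: add_0_right c1 c3)
    also have "\<dots> = - \<phi> k"
      unfolding \<phi>_def using fL_odd[OF c2] by simp
    finally show ?thesis .
  qed
  have "sum \<phi> {0..n} = sum (\<lambda>k. \<phi> (n + 0 - k)) {0..n}"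
    by (rule sum.atLeastAtMost_rev)
  also have "\<dots> = - sum \<phi> {0..n}"
    using neg by (simp add: sum_negf)
  finally show ?thesis unfolding \<phi>_def by simp
qed



lemma g_zero:
  fixes j :: nat
  assumes L: "L > 0" and A: "A analytic_on UNIV"
  defines "z \<equiv> - of_nat (2*j+1) :: complex"
  shows "(\<lambda>s. A s * (\<Sum>k. tk L k s)) analytic_on {z}" "A z * (\<Sum>k. tk L k z) = 0"
proof -
  define n where "n = 2*j+1"
  have n: "odd n" by (simp add: n_def)
  have zk: "z + 2 * of_nat k = of_real (of_int (2 * int k - int n))" for k
    by (simp add: z_def n_def)
  have den: "1 - exp (-(2 * of_real L * (s + 2 * of_nat k))) \<noteq> 0" if "s \<in> {z}" for s k
  proof -
    have "2 * int k - int n \<noteq> 0" using n by presburger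
    hence r0: "real_of_int (2 * int k - int n) \<noteq> 0" by simp
    have "exp (-2 * of_real L * of_real (of_int (2 * int k - int n))) \<noteq> (1::complex)"
      by (rule exp_real_ne1[OF L r0]) simp
    thus ?thesis using that zk[of k] by auto
  qed
  obtain K0 T where T: "T holomorphic_on ball z 1"
    "\<And>s. s \<in> ball z 1 \<Longrightarrow> (\<lambda>k. tk L k s) sums (T s + (\<Sum>k<K0. tk L k s))"
    using tk_local[OF L] by metis
  define H where "H s = A s * (T s + (\<Sum>k<K0. tk L k s))" for s
  have ev: "eventually (\<lambda>s. s \<in> ball z 1) (nhds z)"
    by (intro eventually_nhds_in_open) auto
  have eq: "eventually (\<lambda>s. A s * (\<Sum>k. tk L k s) = H s) (nhds z)"
    using ev by eventually_elim (use T(2) in \<open>auto simp: H_def sums_iff\<close>)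
  have Tz: "T analytic_on {z}"
    using T(1) analytic_on_open[of "ball z 1" T] analytic_on_subset[of T "ball z 1" "{z}"] by auto
  have "H analytic_on {z}"
    unfolding H_def
    by (intro analytic_intros Tz tk_analytic analytic_on_subset[OF A] den) auto
  thus "(\<lambda>s. A s * (\<Sum>k. tk L k s)) analytic_on {z}"
    using analytic_at_cong[OF eq refl] by simp
  have tz: "tk L k z = (if k \<le> n then of_nat (n choose k) * fL L (of_int (2 * int k - int n)) else 0)" for k
  proof -
    have "-z = of_nat n" by (simp add: z_def n_def)
    hence "(-z) gchoose k = of_nat (n choose k)" by (simp add: binomial_gbinomial)
    thus ?thesis unfolding tk_def zk by simp
  qed
  have "(\<Sum>k. tk L k z) = (\<Sum>k\<in>{0..n}. tk L k z)"
    by (rule suminf_finite) (auto simp: tz)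
  also have "\<dots> = (\<Sum>k=0..n. of_nat (n choose k) * fL L (of_int (2 * int k - int n)))"
    by (intro sum.cong) (auto simp: tz)
  also have "\<dots> = 0" by (rule binom_sum_zero[OF L n])
  finally show "A z * (\<Sum>k. tk L k z) = 0" by simp
qed



lemma swap_sum:
  assumes L: "L > 0" and s: "Re s > 0"
  shows "(\<lambda>n. \<Sum>k. aa L s n k) sums (\<Sum>k. tk L k s)"
proof -
  define \<sigma> where "\<sigma> = Re s"
  define R where "R = norm s"
  define q where "q = exp (-2 * L)"
  have q: "0 \<le> q" "q < 1" using L by (auto simp: q_def)
  have R: "R > 0" using s by (auto simp: R_def)
  define u where "u n = exp (-(real (2*n+1) * L * \<sigma>))" for n
  define V where "V = (1 - q) powr (-R)"
  define v where "v k = pochhammer R k / fact k * q ^ k" for k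
  have v0: "v k \<ge> 0" for k
    using R q pochhammer_pos[OF R, of k] unfolding v_def by (intro mult_nonneg_nonneg divide_nonneg_pos) auto
  have u0: "u n \<ge> 0" for n by (simp add: u_def)
  have vsum: "v sums V" unfolding v_def V_def by (rule pochhammer_series[OF q])
  have usum: "summable u"
  proof -
    have "norm (exp (-(2 * L * \<sigma>))) < 1" using L s by (simp add: \<sigma>_def)
    hence "summable (\<lambda>n. exp (-(L * \<sigma>)) * exp (-(2 * L * \<sigma>)) ^ n)"
      by (intro summable_mult summable_geometric) auto
    moreover have "exp (-(L * \<sigma>)) * exp (-(2 * L * \<sigma>)) ^ n = u n" for n
    proof -
      have "exp (-(2 * L * \<sigma>)) ^ n = exp (real n * (-(2 * L * \<sigma>)))"
        by (simp only: exp_of_nat_mult)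
      hence "exp (-(L * \<sigma>)) * exp (-(2 * L * \<sigma>)) ^ n = exp (-(L * \<sigma>) + real n * (-(2 * L * \<sigma>)))"
        by (simp only: exp_add)
      also have "-(L * \<sigma>) + real n * (-(2 * L * \<sigma>)) = -(real (2*n+1) * L * \<sigma>)"
        by (simp add: algebra_simps)
      finally show ?thesis by (simp add: u_def)
    qed
    ultimately show ?thesis by simp
  qed
  have bound: "norm (aa L s n k) \<le> u n * v k" for n k
  proof -
    have b: "norm ((-s) gchoose k) \<le> pochhammer R k / fact k"
      by (rule norm_gbinomial_le) (simp add: R_def)
    have "norm (exp (-(of_nat (2*n+1) * of_real L * (s + 2 * of_nat k)))) =
          exp (-(real (2*n+1) * L * (\<sigma> + 2 * real k)))"
      by (simp add: norm_exp_eq_Re \<sigma>_def)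
    also have "\<dots> = u n * exp (-(real (2*n+1) * (2 * L * real k)))"
      by (simp add: u_def exp_add[symmetric] algebra_simps)
    also have "exp (-(real (2*n+1) * (2 * L * real k))) \<le> exp (-(2 * L * real k))"
    proof (intro exp_mono)
      have "real k \<le> (1 + 2 * real n) * real k" by (simp add: algebra_simps)
      hence "2 * L * real k \<le> 2 * L * ((1 + 2 * real n) * real k)" using L by (intro mult_left_mono) auto
      thus "-(real (2*n+1) * (2 * L * real k)) \<le> -(2 * L * real k)" by (simp add: algebra_simps)
    qed
    also have "exp (-(2 * L * real k)) = q ^ k"
      by (simp add: q_def exp_of_nat_mult[symmetric] algebra_simps)
    finally have e: "norm (exp (-(of_nat (2*n+1) * of_real L * (s + 2 * of_nat k)))) \<le> u n * q ^ k"
      using u0 by (simp add: mult_left_mono)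
    have "norm (aa L s n k) = norm ((-s) gchoose k) * norm (exp (-(of_nat (2*n+1) * of_real L * (s + 2 * of_nat k))))"
      by (simp add: aa_def norm_mult)
    also have "\<dots> \<le> (pochhammer R k / fact k) * (u n * q ^ k)"
      by (rule mult_mono[OF b e]) (use order_trans[OF norm_ge_zero b] in auto)
    finally show ?thesis by (simp add: v_def mult_ac)
  qed
  have bsum: "(\<lambda>(n,k). u n * v k) summable_on (UNIV \<times> UNIV)"
  proof (rule summable_on_SigmaI[where g = "\<lambda>n. u n * V"])
    show "((\<lambda>k. case (n, k) of (n, k) \<Rightarrow> u n * v k) has_sum u n * V) UNIV" for n
      using sums_nonneg_imp_has_sum[OF sums_mult[OF vsum, of "u n"]] u0 v0 by simp
    show "(\<lambda>n. u n * V) summable_on UNIV"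
      using summable_mult2[OF usum, of V] u0 v0 sums_le[OF _ sums_zero vsum]
      by (subst summable_on_UNIV_nonneg_real_iff) (auto intro!: mult_nonneg_nonneg)
  qed (use u0 v0 in auto)
  have asum: "(\<lambda>(n,k). aa L s n k) summable_on (UNIV \<times> UNIV)"
  proof -
    have "(\<lambda>x. norm ((\<lambda>(n,k). u n * v k) x)) summable_on (UNIV \<times> UNIV)"
      using bsum by (rule summable_on_cong[THEN iffD1, rotated]) (use u0 v0 in auto)
    hence "(\<lambda>x. norm ((\<lambda>(n,k). aa L s n k) x)) summable_on (UNIV \<times> UNIV)"
      by (rule Infinite_Sum.abs_summable_on_comparison_test) (use bound u0 v0 in auto)
    thus ?thesis by (rule Infinite_Sum.abs_summable_summable)
  qed
  define S where "S = infsum (\<lambda>(n,k). aa L s n k) (UNIV \<times> UNIV)"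
  have S: "((\<lambda>(n,k). aa L s n k) has_sum S) (UNIV \<times> UNIV)"
    unfolding S_def using asum by (rule has_sum_infsum)
  have inner1: "((\<lambda>k. aa L s n k) has_sum (\<Sum>k. aa L s n k)) UNIV" for n
  proof -
    have ns: "summable (\<lambda>k. norm (aa L s n k))"
      by (rule summable_comparison_test[OF _ summable_mult[OF sums_summable[OF vsum], of "u n"]])
         (auto simp: bound)
    show ?thesis
      by (rule norm_summable_imp_has_sum[OF ns summable_sums[OF summable_norm_cancel[OF ns]]])
  qed
  have "((\<lambda>n. \<Sum>k. aa L s n k) has_sum S) UNIV"
    using has_sum_Sigma'[OF S] inner1 by auto
  hence r1: "(\<lambda>n. \<Sum>k. aa L s n k) sums S" by (rule has_sum_imp_sums)
  have S': "((\<lambda>(k,n). aa L s n k) has_sum S) (UNIV \<times> UNIV)"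
    using has_sum_swap[THEN iffD1, OF S] by (simp add: case_prod_unfold)
  have inner2: "((\<lambda>n. aa L s n k) has_sum tk L k s) UNIV" for k
  proof -
    have ns: "summable (\<lambda>n. norm (aa L s n k))"
      by (rule summable_comparison_test[OF _ summable_mult2[OF usum, of "v k"]])
         (auto simp: bound)
    have w: "Re (s + 2 * of_nat k) > 0" using s by simp
    have "(\<lambda>n. ((-s) gchoose k) * exp (-(of_nat (2*n+1) * of_real L * (s + 2 * of_nat k)))) sums
            (((-s) gchoose k) * fL L (s + 2 * of_nat k))"
      by (rule sums_mult[OF geo_fL[OF L w]])
    hence "(\<lambda>n. aa L s n k) sums tk L k s" by (simp add: aa_def tk_def)
    thus ?thesis by (rule norm_summable_imp_has_sum[OF ns])
  qed
  have "((\<lambda>k. tk L k s) has_sum S) UNIV"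
    using has_sum_Sigma'[OF S'] inner2 by auto
  hence "(\<lambda>k. tk L k s) sums S" by (rule has_sum_imp_sums)
  with r1 show ?thesis by (simp add: sums_iff)
qed



lemma sqrt_irrat:
  assumes sf: "squarefree D" and D: "D > (1::nat)"
  shows "sqrt (real D) \<notin> \<rat>"
proof
  assume r: "sqrt (real D) \<in> \<rat>"
  have "algebraic_int (real D)" by (metis algebraic_int_of_nat)
  hence "algebraic_int (sqrt (real D))" by (rule algebraic_int_sqrt)
  hence "sqrt (real D) \<in> \<int>" using r by (rule rational_algebraic_int_is_int)
  then obtain m :: int where m: "sqrt (real D) = of_int m" by (auto elim: Ints_cases)
  have "m \<ge> 0" using m by (metis of_int_0_le_iff real_sqrt_ge_zero of_nat_0_le_iff)
  then obtain k :: nat where k: "m = int k" by (metis nonneg_int_cases)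
  have "real D = (sqrt (real D))^2" by simp
  also have "\<dots> = real (k^2)" using m k by simp
  finally have Dk: "D = k^2" by (simp only: of_nat_eq_iff)
  hence "k dvd 1" using squarefreeD[OF sf, of k] by simp
  hence "k = 1" by simp
  thus False using Dk D by simp
qed

lemma qconj_int:
  assumes sf: "squarefree D" and D: "D > (1::nat)"
  shows "qconj D (of_int c) = of_int c"
  unfolding qconj_def
proof (rule the_equality)
  show "\<exists>a b :: rat. of_int c = of_rat a + of_rat b * sqrt (real D) \<and> of_int c = of_rat a - of_rat b * sqrt (real D)"
    by (rule exI[of _ "of_int c"], rule exI[of _ 0]) simp
next
  fix y assume "\<exists>a b :: rat. of_int c = of_rat a + of_rat b * sqrt (real D) \<and> y = of_rat a - of_rat b * sqrt (real D)"
  then obtain a b :: rat where ab: "of_int c = of_rat a + of_rat b * sqrt (real D)" "y = of_rat a - of_rat b * sqrt (real D)"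
    by blast
  have "b = 0"
  proof (rule ccontr)
    assume b: "b \<noteq> 0"
    have "sqrt (real D) = (of_int c - of_rat a) / of_rat b"
      using ab(1) b by (simp add: field_simps)
    also have "\<dots> \<in> \<rat>" by (intro Rats_divide Rats_diff) auto
    finally show False using sqrt_irrat[OF sf D] by contradiction
  qed
  thus "y = of_int c" using ab by simp
qed



lemma term_eq:
  fixes L \<kappa> :: real
  assumes L: "L > 0" and k: "\<kappa> \<noteq> 0"
  shows "complex_of_real (\<kappa> * (exp (real (2*n+1) * L) + exp (-(real (2*n+1) * L)))) powr (-s)
        = exp (-s * Ln (of_real \<kappa>)) * (\<Sum>k. aa L s n k)"
proof -
  define m where "m = real (2*n+1)"
  define x where "x = exp (-(2 * m * L))"
  define X where "X = exp (m * L) + exp (-(m * L))"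
  have X0: "X > 0" by (simp add: X_def add_pos_pos)
  have x0: "0 < x" "x < 1" using L by (auto simp: x_def m_def)
  have Xe: "X = exp (m * L) * (1 + x)"
    by (simp add: X_def x_def algebra_simps exp_add[symmetric])
  have lnX: "ln X = m * L + ln (1 + x)"
    using x0 by (simp add: Xe ln_mult)
  have cX: "complex_of_real (\<kappa> * X) = of_real X * of_real \<kappa>" by simp
  have lnt: "Ln (of_real X * of_real \<kappa>) = of_real (ln X) + Ln (of_real \<kappa>)"
    using Ln_times_of_real[of X "of_real \<kappa>"] X0 k Ln_of_real[OF X0] by simp
  have nz: "complex_of_real (\<kappa> * X) \<noteq> 0" using X0 k by simp
  have "complex_of_real (\<kappa> * X) powr (-s) = exp (-s * (of_real (ln X) + Ln (of_real \<kappa>)))"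
    unfolding powr_def using nz by (simp only: if_False cX lnt)
  also have "\<dots> = exp (-s * Ln (of_real \<kappa>)) * (exp (-s * of_real (m * L)) * exp (-s * of_real (ln (1 + x))))"
  proof -
    have "-s * (of_real (ln X) + Ln (of_real \<kappa>)) =
          -s * Ln (of_real \<kappa>) + (-s * of_real (m * L) + -s * of_real (ln (1 + x)))"
      by (simp add: lnX algebra_simps)
    thus ?thesis by (simp only: exp_add)
  qed
  also have "exp (-s * of_real (ln (1 + x))) = (1 + of_real x) powr (-s)"
  proof -
    have o: "1 + complex_of_real x = of_real (1 + x)" by simp
    have nz1: "1 + complex_of_real x \<noteq> 0" unfolding o using x0 by (simp only: of_real_eq_0_iff)
    have "Ln (1 + complex_of_real x) = of_real (ln (1 + x))" unfolding o by (rule Ln_of_real) (use x0 in linarith)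
    thus ?thesis using nz1 by (simp add: powr_def)
  qed
  finally have e1: "complex_of_real (\<kappa> * X) powr (-s) =
     exp (-s * Ln (of_real \<kappa>)) * (exp (-s * of_real (m * L)) * (1 + of_real x) powr (-s))" .
  have "(\<lambda>k. ((-s) gchoose k) * (of_real x)^k) sums ((1 + of_real x) powr (-s))"
    by (rule gen_binomial_complex) (use x0 in simp)
  hence "(\<lambda>k. exp (-s * of_real (m * L)) * (((-s) gchoose k) * (of_real x)^k)) sums
          (exp (-s * of_real (m * L)) * (1 + of_real x) powr (-s))"
    by (rule sums_mult)
  moreover have "exp (-s * of_real (m * L)) * (((-s) gchoose k) * (of_real x)^k) = aa L s n k" for k
  proof -
    have "(complex_of_real x)^k = exp (of_nat k * of_real (-(2 * m * L)))"
      by (simp only: x_def exp_of_real[symmetric] exp_of_nat_mult)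
    hence "exp (-s * of_real (m * L)) * (complex_of_real x)^k =
           exp (-s * of_real (m * L) + of_nat k * of_real (-(2 * m * L)))"
      by (simp only: exp_add)
    also have "-s * of_real (m * L) + of_nat k * of_real (-(2 * m * L)) =
               -(of_nat (2*n+1) * of_real L * (s + 2 * of_nat k))"
      by (simp add: m_def algebra_simps)
    finally show ?thesis by (simp add: aa_def mult_ac)
  qed
  ultimately have "(\<lambda>k. aa L s n k) sums (exp (-s * of_real (m * L)) * (1 + of_real x) powr (-s))"
    by simp
  hence "(\<Sum>k. aa L s n k) = exp (-s * of_real (m * L)) * (1 + of_real x) powr (-s)"
    by (simp add: sums_iff)
  with e1 show ?thesis by (simp add: X_def m_def)
qed



lemma odd_pow_sum:
  fixes u :: real
  assumes u: "u \<noteq> 0" "\<bar>u\<bar> \<noteq> 1" and m: "odd m"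
  defines "e \<equiv> (if \<bar>u\<bar> > 1 then \<bar>u\<bar> else inverse \<bar>u\<bar>)"
  shows "e > 1" "u ^ m + inverse u ^ m = sgn u * (exp (real m * ln e) + exp (-(real m * ln e)))"
proof -
  show e1: "e > 1"
    using u by (auto simp: e_def one_less_inverse_iff)
  have s: "sgn u ^ m = sgn u" using m u by (cases "u > 0") (auto simp: sgn_if)
  have si: "inverse (sgn u) = sgn u" using u by (cases "u > 0") (auto simp: sgn_if)
  have ua: "u = sgn u * \<bar>u\<bar>" by (simp add: sgn_mult_abs)
  have "u ^ m + inverse u ^ m = sgn u * (\<bar>u\<bar> ^ m + inverse \<bar>u\<bar> ^ m)"
    by (subst (1 2) ua) (simp add: power_mult_distrib s si distrib_left)
  also have "\<bar>u\<bar> ^ m + inverse \<bar>u\<bar> ^ m = e ^ m + inverse e ^ m"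
    using u by (auto simp: e_def)
  also have "e ^ m = exp (real m * ln e)"
    using e1 by (simp add: exp_of_nat_mult)
  also have "inverse e ^ m = exp (-(real m * ln e))"
    using e1 by (simp add: exp_minus exp_of_nat_mult power_inverse)
  finally show "u ^ m + inverse u ^ m = sgn u * (exp (real m * ln e) + exp (-(real m * ln e)))" .
qed

theorem mainTheorem7:
  fixes D :: nat
  assumes "squarefree D" and "D > 1"
    and "qnorm D (fund_unit D) = -1"
  shows "\<exists>g. g meromorphic_on UNIV \<and> (\<forall>s. Re s > 0 \<longrightarrow> g s = Z_odd D s) \<and>
             (\<forall>j::nat. g analytic_on {- of_nat (2 * j + 1)} \<and> g (- of_nat (2 * j + 1)) = 0)"
proof -
  define u where "u = fund_unit D"
  have uq: "u * qconj D u = -1" using assms(3) by (simp add: qnorm_def u_def)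
  have u0: "u \<noteq> 0" using uq by auto
  have q1: "qconj D 1 = 1" using qconj_int[OF assms(1,2), of 1] by simp
  have qm1: "qconj D (-1) = -1" using qconj_int[OF assms(1,2), of "-1"] by simp
  have u1: "\<bar>u\<bar> \<noteq> 1"
  proof
    assume "\<bar>u\<bar> = 1"
    hence "u = 1 \<or> u = -1" by auto
    thus False using uq q1 qm1 by auto
  qed
  have qc: "qconj D u = - inverse u" using uq u0 by (simp add: field_simps)
  define c where "c = sqrt (real (qdisc D))"
  have c0: "c > 0" using assms(2) by (simp add: c_def qdisc_def)
  define e where "e = (if \<bar>u\<bar> > 1 then \<bar>u\<bar> else inverse \<bar>u\<bar>)"
  define L where "L = ln e"
  have e1: "e > 1" using odd_pow_sum(1)[OF u0 u1, of 1] by (simp add: e_def)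
  have L: "L > 0" using e1 by (simp add: L_def)
  define \<kappa> where "\<kappa> = sgn u / c"
  have k0: "\<kappa> \<noteq> 0" using u0 c0 by (simp add: \<kappa>_def sgn_if)
  have F: "F_D D (2*n+1) = \<kappa> * (exp (real (2*n+1) * L) + exp (-(real (2*n+1) * L)))" for n
  proof -
    have o: "odd (2*n+1)" by simp
    have "F_D D (2*n+1) = (u ^ (2*n+1) + inverse u ^ (2*n+1)) / c"
      unfolding F_D_def u_def[symmetric] c_def[symmetric] qc
      by (simp add: power_minus_odd[OF o])
    also have "u ^ (2*n+1) + inverse u ^ (2*n+1) = sgn u * (exp (real (2*n+1) * L) + exp (-(real (2*n+1) * L)))"
      using odd_pow_sum(2)[OF u0 u1 o] by (simp add: L_def e_def)
    finally show ?thesis by (simp add: \<kappa>_def)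
  qed
  define A where "A s = exp (-s * Ln (of_real \<kappa>))" for s :: complex
  have Aan: "A analytic_on UNIV" unfolding A_def [abs_def] by (intro analytic_intros)
  define g where "g s = A s * (\<Sum>k. tk L k s)" for s
  have "g meromorphic_on UNIV" unfolding g_def by (rule g_mero[OF L Aan])
  moreover have "g s = Z_odd D s" if s: "Re s > 0" for s
  proof -
    have "(\<lambda>n. A s * (\<Sum>k. aa L s n k)) sums (A s * (\<Sum>k. tk L k s))"
      by (rule sums_mult[OF swap_sum[OF L s]])
    moreover have "complex_of_real (F_D D (2 * n + 1)) powr (-s) = A s * (\<Sum>k. aa L s n k)" for n
      unfolding F A_def by (rule term_eq[OF L k0])
    ultimately show ?thesis by (simp add: Z_odd_def g_def sums_iff)
  qed
  moreover have "g analytic_on {- of_nat (2 * j + 1)} \<and> g (- of_nat (2 * j + 1)) = 0" for j :: nat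
    unfolding g_def using g_zero[OF L Aan, of j] by simp
  ultimately show ?thesis by blast
qed

end
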